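(* Let $x_0\in\mathbb{R}$, $r>0$, and let $F:(x_0-r,x_0+r)\to\mathbb{R}$ be of class $C^1$ with $F(x_0)=x_0$ and $|F'(x_0)|<1$. Then there exists $r_1\in(0,r)$ such that for every $x_1\in(x_0-r_1,x_0+r_1)$, the sequence defined by $x_{n+1}=F(x_n)$ has $\dim_BS(x_1)=0$, where $S(x_1)=\{x_n:n\ge1\}$.
   Context: For a bounded set $S\subset\mathbb{R}$ and $\varepsilon>0$, $S_\varepsilon=\{y: \mathrm{dist}(y,S)<\varepsilon\}$ and $|S_\varepsilon|$ is its Lebesgue measure. $\mathcal M^{*s}(S)=\limsup_{\varepsilon\to0}|S_\varepsilon|/\varepsilon^{1-s}$, $\mathcal M_*^{s}(S)=\liminf_{\varepsilon\to0}|S_\varepsilon|/\varepsilon^{1-s}$; $\overline{\dim}_BS=\inf\{s\ge0:\mathcal M^{*s}(S)=0\}$, $\underline{\dim}_BS=\inf\{s\ge0:\mathcal M_*^{s}(S)=0\}$, and $\dim_BS$ is their common value when equal. *)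

theory Defs
  imports "HOL-Analysis.Analysis"
begin

definition nbhd :: "real set \<Rightarrow> real \<Rightarrow> real set" where
  "nbhd S e = {y. \<exists>x\<in>S. dist y x < e}"

definition upper_mink :: "real \<Rightarrow> real set \<Rightarrow> ereal" where
  "upper_mink s S = Limsup (at_right 0) (\<lambda>e. ereal (measure lebesgue (nbhd S e) / e powr (1 - s)))"

definition lower_mink :: "real \<Rightarrow> real set \<Rightarrow> ereal" where
  "lower_mink s S = Liminf (at_right 0) (\<lambda>e. ereal (measure lebesgue (nbhd S e) / e powr (1 - s)))"

definition upper_box_dim :: "real set \<Rightarrow> real" where
  "upper_box_dim S = Inf {s. s \<ge> 0 \<and> upper_mink s S = 0}"

definition lower_box_dim :: "real set \<Rightarrow> real" where
  "lower_box_dim S = Inf {s. s \<ge> 0 \<and> lower_mink s S = 0}"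

definition has_box_dim :: "real set \<Rightarrow> real \<Rightarrow> bool" where
  "has_box_dim S d \<longleftrightarrow> upper_box_dim S = d \<and> lower_box_dim S = d"

end

theory Submission
  imports Defs "HOL-Real_Asymp.Real_Asymp"
begin

lemma nbhd_bound:
  fixes x :: "nat \<Rightarrow> real"
  assumes c: "c > 0" and q: "0 < q" "q < 1" and bnd: "\<And>n. \<bar>x n - x0\<bar> \<le> c * q ^ n"
    and e: "0 < e" "e < c"
  shows "measure lebesgue (nbhd (range x) e) \<le> 4*e + 2 * (ln (c/e)/ln (1/q) + 1) * e"
proof -
  define L where "L = ln (1/q)"
  have L: "L > 0" using q by (simp add: L_def)
  define N where "N = nat \<lceil>ln (c/e) / L\<rceil>"
  have lce: "ln (c/e) > 0" using e c by simp
  have N1: "real N \<ge> ln (c/e) / L" unfolding N_def by linarith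
  have N2: "real N \<le> ln (c/e) / L + 1" unfolding N_def using lce L
    using of_int_ceiling_le_add_one[of "ln (c/e) / L"] by (simp add: of_nat_nat)
  have qN: "c * q ^ N \<le> e"
  proof -
    have "q ^ N = exp (- (real N * L))" using q
      by (simp add: L_def ln_div powr_realpow[symmetric] powr_def)
    also have "\<dots> \<le> exp (- ln (c/e))" using N1 L by (simp add: field_simps)
    also have "\<dots> = e / c" using e c by (simp add: exp_minus)
    finally show ?thesis using c by (simp add: field_simps)
  qed
  define B where "B = {x0-2*e..x0+2*e} \<union> (\<Union>n\<in>{..<N}. {x n - e..x n + e})"
  have sub: "nbhd (range x) e \<subseteq> B"
  proof
    fix y assume "y \<in> nbhd (range x) e"
    then obtain n where yn: "\<bar>y - x n\<bar> < e" by (auto simp: nbhd_def dist_real_def)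
    show "y \<in> B"
    proof (cases "n < N")
      case True
      have "y \<in> (\<Union>n\<in>{..<N}. {x n - e..x n + e})"
        using True yn by (intro UN_I[of n]) auto
      then show ?thesis unfolding B_def by blast
    next
      case False
      have "q ^ n \<le> q ^ N" using False q by (simp add: power_decreasing)
      then have "c * q ^ n \<le> c * q ^ N" using c by (intro mult_left_mono) auto
      then have "\<bar>x n - x0\<bar> \<le> e" using bnd[of n] qN by linarith
      then show ?thesis using yn unfolding B_def by auto
    qed
  qed
  have op: "open (nbhd (range x) e)"
  proof -
    have "nbhd (range x) e = (\<Union>z\<in>range x. ball z e)"
      by (auto simp: nbhd_def ball_def dist_commute)
    then show ?thesis by auto
  qed
  have Bm: "B \<in> lmeasurable" unfolding B_def
    by (intro lmeasurable_compact compact_Un compact_UN) auto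
  have "measure lebesgue (nbhd (range x) e) \<le> measure lebesgue B"
    by (rule measure_mono_fmeasurable[OF sub _ Bm]) (simp add: op borel_open)
  also have "\<dots> \<le> measure lebesgue {x0-2*e..x0+2*e} + measure lebesgue (\<Union>n\<in>{..<N}. {x n - e..x n + e})"
    unfolding B_def by (rule measure_Un_le) auto
  also have "measure lebesgue (\<Union>n\<in>{..<N}. {x n - e..x n + e}) \<le> (\<Sum>n\<in>{..<N}. measure lebesgue {x n - e..x n + e})"
    by (rule measure_UNION_le) auto
  also have "\<dots> = 2 * e * N" using e by simp
  also have "measure lebesgue {x0-2*e..x0+2*e} = 4 * e" using e by simp
  finally have "measure lebesgue (nbhd (range x) e) \<le> 4*e + 2*e*N" by simp
  also have "\<dots> \<le> 4*e + 2*e*(ln (c/e) / L + 1)" using N2 e by simp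
  finally show ?thesis by (simp add: L_def mult_ac)
qed

lemma asym_aux: "s > 0 \<Longrightarrow> c > 0 \<Longrightarrow> L > 0 \<Longrightarrow> ((\<lambda>e::real. (4*e + 2 * (ln (c/e)/L + 1) * e) / e powr (1-s)) \<longlongrightarrow> 0) (at_right 0)"
  by real_asymp

lemma Inf_pos_set:
  assumes "{0<..} \<subseteq> T" "T \<subseteq> {0::real..}"
  shows "Inf T = 0"
proof -
  have ne: "T \<noteq> {}" using assms(1) by (metis empty_iff greaterThan_iff subset_empty zero_less_one)
  have bd: "bdd_below T" using assms(2) by (meson bdd_below_Ici bdd_below_mono)
  have "0 \<le> Inf T" using ne assms(2) by (intro cInf_greatest) auto
  moreover have "Inf T \<le> 0"
  proof (rule dense_ge)
    fix s :: real assume "0 < s" then show "Inf T \<le> s"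
      using assms(1) bd by (intro cInf_lower) auto
  qed
  ultimately show ?thesis by simp
qed

lemma geom_box_dim:
  fixes x :: "nat \<Rightarrow> real"
  assumes c: "c > 0" and q: "0 < q" "q < 1" and bnd: "\<And>n. \<bar>x n - x0\<bar> \<le> c * q ^ n"
  shows "has_box_dim (range x) 0"
proof -
  have lim: "((\<lambda>e. ereal (measure lebesgue (nbhd (range x) e) / e powr (1 - s))) \<longlongrightarrow> 0) (at_right 0)"
    if s: "s > 0" for s
  proof -
    have L: "ln (1/q) > 0" using q by simp
    have "((\<lambda>e. measure lebesgue (nbhd (range x) e) / e powr (1 - s)) \<longlongrightarrow> 0) (at_right 0)"
    proof (rule tendsto_sandwich[OF _ _ tendsto_const asym_aux[OF s c L]])
      show "\<forall>\<^sub>F e in at_right 0. 0 \<le> measure lebesgue (nbhd (range x) e) / e powr (1 - s)"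
        by (simp add: measure_nonneg)
      have "\<forall>\<^sub>F e in at_right (0::real). 0 < e \<and> e < c" using c by (auto simp: eventually_at_right intro!: exI[of _ c])
      then show "\<forall>\<^sub>F e in at_right 0. measure lebesgue (nbhd (range x) e) / e powr (1 - s)
          \<le> (4*e + 2 * (ln (c/e)/ln (1/q) + 1) * e) / e powr (1-s)"
        by eventually_elim (intro divide_right_mono nbhd_bound[OF c q bnd], auto)
    qed
    then show ?thesis by (simp add: zero_ereal_def tendsto_ereal)
  qed
  have up: "upper_box_dim (range x) = 0" unfolding upper_box_dim_def upper_mink_def
    by (rule Inf_pos_set) (auto intro!: lim_imp_Limsup lim)
  have lo: "lower_box_dim (range x) = 0" unfolding lower_box_dim_def lower_mink_def
    by (rule Inf_pos_set) (auto intro!: lim_imp_Liminf lim)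
  show ?thesis using up lo by (simp add: has_box_dim_def)
qed
lemma aux: "(u::real) < (1 - t)/2 \<Longrightarrow> A \<le> u + t \<Longrightarrow> A \<le> (t + 1)/2"
  by (simp add: field_simps)

lemma contr_step:
  fixes F D :: "real \<Rightarrow> real"
  assumes der: "\<And>y. \<bar>y - a\<bar> \<le> R \<Longrightarrow> (F has_real_derivative D y) (at y)"
    and bd: "\<And>y. \<bar>y - a\<bar> \<le> R \<Longrightarrow> \<bar>D y\<bar> \<le> q"
    and fx: "F a = a" and y: "\<bar>y - a\<bar> \<le> R"
  shows "\<bar>F y - a\<bar> \<le> q * \<bar>y - a\<bar>"
proof (cases "y < a")
  case True
  obtain z where z: "y < z" "z < a" "F a - F y = (a - y) * D z"
    using MVT2[OF True, of F D] der y by force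
  have "\<bar>D z\<bar> \<le> q" using bd z y by simp
  moreover have "F y - a = - (D z * (a - y))" using z fx by (simp add: algebra_simps)
  ultimately show ?thesis using True
    by (simp add: abs_mult; metis abs_of_pos diff_gt_0_iff_gt mult_right_mono abs_ge_zero less_imp_le abs_minus_commute)
next
  case False
  show ?thesis
  proof (cases "y = a")
    case True then show ?thesis using fx by simp
  next
    case False2: False
    then have lt: "a < y" using False by simp
    obtain z where z: "a < z" "z < y" "F y - F a = (y - a) * D z"
      using MVT2[OF lt, of F D] der y by force
    have "\<bar>D z\<bar> \<le> q" using bd z y by simp
    moreover have "F y - a = D z * (y - a)" using z fx by (simp add: algebra_simps)
    ultimately show ?thesis using lt
      by (simp add: abs_mult; metis abs_of_pos diff_gt_0_iff_gt mult_right_mono abs_ge_zero less_imp_le)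
  qed
qed

theorem theorem5:
  fixes F :: "real \<Rightarrow> real" and x0 r :: real
  assumes "r > 0"
    and "F C1_differentiable_on {x0 - r<..<x0 + r}"
    and "F x0 = x0"
    and "\<bar>deriv F x0\<bar> < 1"
  shows "\<exists>r1. 0 < r1 \<and> r1 < r \<and>
           (\<forall>x1\<in>{x0 - r1<..<x0 + r1}. has_box_dim {(F ^^ n) x1 | n. True} 0)"
proof -
  define U where "U = {x0 - r<..<x0 + r}"
  obtain D where Dd: "\<And>x. x \<in> U \<Longrightarrow> (F has_vector_derivative D x) (at x)" and Dc: "continuous_on U D"
    using assms(2) unfolding C1_differentiable_on_def U_def by blast
  have x0U: "x0 \<in> U" using assms(1) by (simp add: U_def)
  have Dr: "\<And>x. x \<in> U \<Longrightarrow> (F has_real_derivative D x) (at x)"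
    using Dd by (simp add: has_real_derivative_iff_has_vector_derivative)
  have "deriv F x0 = D x0" using Dr[OF x0U] by (rule DERIV_imp_deriv)
  then have D0: "\<bar>D x0\<bar> < 1" using assms(4) by simp
  have "isCont D x0" using Dc x0U by (simp add: U_def continuous_on_eq_continuous_at)
  then obtain d where d: "d > 0" and dD: "\<And>x. dist x x0 < d \<Longrightarrow> dist (D x) (D x0) < (1 - \<bar>D x0\<bar>)/2"
    using D0 unfolding continuous_at_eps_delta by (metis diff_gt_0_iff_gt half_gt_zero)
  define q where "q = (\<bar>D x0\<bar> + 1)/2"
  define r1 where "r1 = min d r / 2"
  have r1: "0 < r1" "r1 < r" "r1 < d" using d assms(1) by (auto simp: r1_def)
  have q: "0 < q" "q < 1" using D0 by (auto simp: q_def)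
  have der: "\<And>y. \<bar>y - x0\<bar> \<le> r1 \<Longrightarrow> (F has_real_derivative D y) (at y)"
    using r1 by (intro Dr) (auto simp: U_def)
  have bd: "\<And>y. \<bar>y - x0\<bar> \<le> r1 \<Longrightarrow> \<bar>D y\<bar> \<le> q"
  proof -
    fix y assume "\<bar>y - x0\<bar> \<le> r1"
    then have "dist (D y) (D x0) < (1 - \<bar>D x0\<bar>)/2" using r1 by (intro dD) (simp add: dist_real_def)
    moreover have "\<bar>D y\<bar> \<le> \<bar>D y - D x0\<bar> + \<bar>D x0\<bar>"
      using abs_triangle_ineq[of "D y - D x0" "D x0"] by simp
    ultimately show "\<bar>D y\<bar> \<le> q" unfolding q_def dist_real_def by (rule aux)
  qed
  have "\<forall>x1\<in>{x0 - r1<..<x0 + r1}. has_box_dim {(F ^^ n) x1 | n. True} 0"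
  proof
    fix x1 assume x1: "x1 \<in> {x0 - r1<..<x0 + r1}"
    have it: "\<bar>(F ^^ n) x1 - x0\<bar> \<le> q ^ n * \<bar>x1 - x0\<bar>" for n
    proof (induction n)
      case 0 then show ?case by simp
    next
      case (Suc n)
      have "q ^ n * \<bar>x1 - x0\<bar> \<le> 1 * r1"
        using x1 q by (intro mult_mono) (auto simp: power_le_one)
      then have "\<bar>(F ^^ n) x1 - x0\<bar> \<le> r1" using Suc by simp
      then have "\<bar>F ((F ^^ n) x1) - x0\<bar> \<le> q * \<bar>(F ^^ n) x1 - x0\<bar>"
        using contr_step[where F=F and D=D and a=x0 and R=r1 and q=q] der bd assms(3) by blast
      also have "\<dots> \<le> q * (q ^ n * \<bar>x1 - x0\<bar>)" using Suc q by (intro mult_left_mono) auto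
      finally show ?case by (simp add: mult_ac)
    qed
    have bnd: "\<bar>(F ^^ n) x1 - x0\<bar> \<le> r1 * q ^ n" for n
    proof -
      have "q ^ n * \<bar>x1 - x0\<bar> \<le> q ^ n * r1" using x1 q by (intro mult_left_mono) auto
      then show ?thesis using it[of n] by (simp add: mult_ac)
    qed
    have "{(F ^^ n) x1 | n. True} = range (\<lambda>n. (F ^^ n) x1)" by auto
    then show "has_box_dim {(F ^^ n) x1 | n. True} 0"
      using geom_box_dim[OF r1(1) q, of "\<lambda>n. (F ^^ n) x1" x0] bnd by simp
  qed
  then show ?thesis using r1 by blast
qed
end
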